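(* Let $(K_d)_{d\in\mathbb N}$ be a sequence of isotropic convex bodies $K_d\subseteq\mathbb R^d$, and let $(A_d)_{d\in\mathbb N}$, $(B_d)_{d\in\mathbb N}$ be positive numbers satisfying \[ \lim_{d\to\infty}\; \min\left\{ A_{d} \, \sqrt{d} \,L_{K_d},\; B_{d} \, d \,L_{K_d}^2\right\} \,=\, 0. \] Then \[ \lim_{d\to\infty}\, \sup_{f\in \mathscr C^1_d(A_d,B_d,K_d)}\, \left| \int_{K_d} f(x)\,dx \,-\, f(0) \right| \,=\, 0. \] In particular, the curse of dimensionality does not hold for the classes $\mathscr C^1_d(A_d,B_d,K_d)$.
   Context: A convex body $K\subseteq\mathbb R^d$ is a compact convex set with non-empty interior. $K$ is isotropic if $\mathrm{vol}_d(K)=1$, $\int_K x\,dx=0$, and there is $L_K\in(0,\infty)$ (the isotropic constant) with $\int_K\langle x,\theta\rangle^2\,dx=L_K^2$ for all $\theta\in\mathbb S^{d-1}$. For $g$ defined on $K_d$, $\mathrm{Lip}(g)=\sup_{x\ne y\in K_d}|g(x)-g(y)|/\|x-y\|_2$, and $D^\theta$ denotes the directional derivative in direction $\theta$. For $A,B>0$, $\mathscr C^1_d(A,B,K_d)=\{f\in\mathscr C^1(K_d): \|f\|_\infty\le1,\ \mathrm{Lip}(f)\le A,\ \mathrm{Lip}(D^\theta f)\le B \text{ for all }\theta\in\mathbb S^{d-1}\}$. Integration problem: approximate $S_d(f)=\int_{K_d}f(x)\,dx$ for $f\in\mathscr F_d$ by algorithms $A_{n,d}(f)=\phi_{n,d}(f(x_1),\dots,f(x_n))$,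 where $\phi_{n,d}:\mathbb R^n\to\mathbb R$ is arbitrary and the points $x_j\in K_d$ may be chosen adaptively. The worst-case error is $e(A_{n,d})=\sup_{f\in\mathscr F_d}|S_d(f)-A_{n,d}(f)|$, and the information complexity $n(\varepsilon,\mathscr F_d)$ is the minimal $n$ for which some such algorithm has $e(A_{n,d})\le\varepsilon$. The curse of dimensionality holds for $(\mathscr F_d)$ if there are $c,\varepsilon_0,\gamma>0$ with $n(\varepsilon,\mathscr F_d)\ge c(1+\gamma)^d$ for all $\varepsilon\le\varepsilon_0$ and infinitely many $d\in\mathbb N$. *)

theory Defs
  imports "HOL-Analysis.Analysis" "HOL-Probability.Probability"
begin

text \<open>Points of R^d are represented as extensional functions on the index set {..<d},
  i.e. the space of the product measure PiM {..<d} (\<lambda>_. lborel).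
  The topology used by compact is the product topology on nat => real, which on this
  carrier coincides with the Euclidean topology of R^d.\<close>

definition Rd :: "nat \<Rightarrow> (nat \<Rightarrow> real) set" where
  "Rd d = ({..<d} \<rightarrow>\<^sub>E (UNIV :: real set))"

definition lebd :: "nat \<Rightarrow> (nat \<Rightarrow> real) measure" where
  "lebd d = PiM {..<d} (\<lambda>_. lborel)"

definition zerod :: "nat \<Rightarrow> nat \<Rightarrow> real" where
  "zerod d = (\<lambda>i\<in>{..<d}. 0)"

definition vaddd :: "nat \<Rightarrow> (nat \<Rightarrow> real) \<Rightarrow> (nat \<Rightarrow> real) \<Rightarrow> nat \<Rightarrow> real" where
  "vaddd d x y = (\<lambda>i\<in>{..<d}. x i + y i)"

definition vdiffd :: "nat \<Rightarrow> (nat \<Rightarrow> real) \<Rightarrow> (nat \<Rightarrow> real) \<Rightarrow> nat \<Rightarrow> real" where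
  "vdiffd d x y = (\<lambda>i\<in>{..<d}. x i - y i)"

definition scaled :: "nat \<Rightarrow> real \<Rightarrow> (nat \<Rightarrow> real) \<Rightarrow> nat \<Rightarrow> real" where
  "scaled d t x = (\<lambda>i\<in>{..<d}. t * x i)"

definition innerd :: "nat \<Rightarrow> (nat \<Rightarrow> real) \<Rightarrow> (nat \<Rightarrow> real) \<Rightarrow> real" where
  "innerd d x y = (\<Sum>i<d. x i * y i)"

definition normd :: "nat \<Rightarrow> (nat \<Rightarrow> real) \<Rightarrow> real" where
  "normd d x = sqrt (innerd d x x)"

definition sphered :: "nat \<Rightarrow> (nat \<Rightarrow> real) set" where
  "sphered d = {\<theta> \<in> Rd d. normd d \<theta> = 1}"

definition convexd :: "nat \<Rightarrow> (nat \<Rightarrow> real) set \<Rightarrow> bool" where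
  "convexd d K \<longleftrightarrow> (\<forall>x\<in>K. \<forall>y\<in>K. \<forall>t::real. 0 \<le> t \<and> t \<le> 1 \<longrightarrow>
      vaddd d (scaled d (1 - t) x) (scaled d t y) \<in> K)"

definition convex_body :: "nat \<Rightarrow> (nat \<Rightarrow> real) set \<Rightarrow> bool" where
  "convex_body d K \<longleftrightarrow> K \<subseteq> Rd d \<and> compact K \<and> convexd d K \<and>
     (\<exists>x\<in>Rd d. \<exists>r>0. {y \<in> Rd d. normd d (vdiffd d y x) < r} \<subseteq> K)"

definition isotropic :: "nat \<Rightarrow> (nat \<Rightarrow> real) set \<Rightarrow> bool" where
  "isotropic d K \<longleftrightarrow> convex_body d K \<and> measure (lebd d) K = 1 \<and>
     (\<forall>i<d. (LINT x:K|lebd d. x i) = 0) \<and>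
     (\<exists>L>0. \<forall>\<theta>\<in>sphered d. (LINT x:K|lebd d. (innerd d x \<theta>)\<^sup>2) = L\<^sup>2)"

definition iso_const :: "nat \<Rightarrow> (nat \<Rightarrow> real) set \<Rightarrow> real" where
  "iso_const d K = (THE L. L > 0 \<and> (\<forall>\<theta>\<in>sphered d. (LINT x:K|lebd d. (innerd d x \<theta>)\<^sup>2) = L\<^sup>2))"

text \<open>g is the gradient of f on K (differentiability relative to K), so that the
  directional derivative is D^theta f (x) = innerd d (g x) theta.\<close>
definition is_grad_on :: "nat \<Rightarrow> (nat \<Rightarrow> real) set \<Rightarrow> ((nat \<Rightarrow> real) \<Rightarrow> real)
     \<Rightarrow> ((nat \<Rightarrow> real) \<Rightarrow> nat \<Rightarrow> real) \<Rightarrow> bool" where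
  "is_grad_on d K f g \<longleftrightarrow> (\<forall>x\<in>K. g x \<in> Rd d \<and>
     (\<forall>e>0. \<exists>\<delta>>0. \<forall>y\<in>K. normd d (vdiffd d y x) < \<delta> \<longrightarrow>
        \<bar>f y - f x - innerd d (g x) (vdiffd d y x)\<bar> \<le> e * normd d (vdiffd d y x)))"

definition C1_on :: "nat \<Rightarrow> (nat \<Rightarrow> real) set \<Rightarrow> ((nat \<Rightarrow> real) \<Rightarrow> real)
     \<Rightarrow> ((nat \<Rightarrow> real) \<Rightarrow> nat \<Rightarrow> real) \<Rightarrow> bool" where
  "C1_on d K f g \<longleftrightarrow> is_grad_on d K f g \<and>
     (\<forall>x\<in>K. \<forall>e>0. \<exists>\<delta>>0. \<forall>y\<in>K. normd d (vdiffd d y x) < \<delta> \<longrightarrow>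
        normd d (vdiffd d (g y) (g x)) < e)"

definition lip_le :: "nat \<Rightarrow> (nat \<Rightarrow> real) set \<Rightarrow> ((nat \<Rightarrow> real) \<Rightarrow> real) \<Rightarrow> real \<Rightarrow> bool" where
  "lip_le d K h c \<longleftrightarrow> (\<forall>x\<in>K. \<forall>y\<in>K. \<bar>h x - h y\<bar> \<le> c * normd d (vdiffd d x y))"

definition C1class :: "nat \<Rightarrow> real \<Rightarrow> real \<Rightarrow> (nat \<Rightarrow> real) set \<Rightarrow> ((nat \<Rightarrow> real) \<Rightarrow> real) set" where
  "C1class d A B K = {f. \<exists>g. C1_on d K f g \<and> (\<forall>x\<in>K. \<bar>f x\<bar> \<le> 1) \<and> lip_le d K f A \<and>
       (\<forall>\<theta>\<in>sphered d. lip_le d K (\<lambda>x. innerd d (g x) \<theta>) B)}"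

text \<open>Adaptive information: the j-th point is chosen from the previously observed values.\<close>
fun info_vals :: "(nat \<Rightarrow> real list \<Rightarrow> (nat \<Rightarrow> real)) \<Rightarrow> ((nat \<Rightarrow> real) \<Rightarrow> real) \<Rightarrow> nat \<Rightarrow> real list" where
  "info_vals pts f 0 = []"
| "info_vals pts f (Suc j) = info_vals pts f j @ [f (pts j (info_vals pts f j))]"

definition achievable :: "(nat \<Rightarrow> real) set \<Rightarrow> ((nat \<Rightarrow> real) \<Rightarrow> real) set
     \<Rightarrow> (((nat \<Rightarrow> real) \<Rightarrow> real) \<Rightarrow> real) \<Rightarrow> nat \<Rightarrow> real \<Rightarrow> bool" where
  "achievable K F S n eps \<longleftrightarrow> (\<exists>pts phi. (\<forall>j<n. \<forall>vs. pts j vs \<in> K) \<and>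
     (\<forall>f\<in>F. \<bar>S f - phi (info_vals pts f n)\<bar> \<le> eps))"

definition curse :: "(nat \<Rightarrow> (nat \<Rightarrow> real) set) \<Rightarrow> (nat \<Rightarrow> ((nat \<Rightarrow> real) \<Rightarrow> real) set)
     \<Rightarrow> (nat \<Rightarrow> ((nat \<Rightarrow> real) \<Rightarrow> real) \<Rightarrow> real) \<Rightarrow> bool" where
  "curse K F S \<longleftrightarrow> (\<exists>c>0. \<exists>eps0>0. \<exists>\<gamma>>0. \<forall>eps. 0 < eps \<and> eps \<le> eps0 \<longrightarrow>
      infinite {d. \<forall>n. achievable (K d) (F d) (S d) n eps \<longrightarrow> c * (1 + \<gamma>) ^ d \<le> real n})"

end

theory Submission
  imports Defs
begin

lemma innerd_cong: "(\<And>i. i < d \<Longrightarrow> x i = x' i) \<Longrightarrow> (\<And>i. i < d \<Longrightarrow> y i = y' i) \<Longrightarrow> innerd d x y = innerd d x' y'"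
  unfolding innerd_def by (auto intro!: sum.cong)

lemma innerd_nonneg: "innerd d x x \<ge> 0"
  unfolding innerd_def by (auto intro!: sum_nonneg)

lemma normd_nonneg: "normd d x \<ge> 0"
  unfolding normd_def using innerd_nonneg by simp

lemma normd_sq: "(normd d x)\<^sup>2 = innerd d x x"
  unfolding normd_def using innerd_nonneg by simp

lemma innerd_commute: "innerd d x y = innerd d y x"
  unfolding innerd_def by (simp add: mult.commute)

lemma innerd_scaled_right: "innerd d v (scaled d c x) = c * innerd d v x"
  unfolding innerd_def scaled_def by (simp add: sum_distrib_left algebra_simps)

lemma innerd_seg: "innerd d v (vdiffd d (scaled d s x) (scaled d t x)) = (s - t) * innerd d v x"
  unfolding innerd_def scaled_def vdiffd_def by (simp add: sum_distrib_left algebra_simps)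

lemma innerd_vdiff_zero: "innerd d v (vdiffd d x (zerod d)) = innerd d v x"
  unfolding innerd_def zerod_def vdiffd_def by simp

lemma normd_scaled: "normd d (scaled d c x) = \<bar>c\<bar> * normd d x"
proof -
  have "innerd d (scaled d c x) (scaled d c x) = c\<^sup>2 * innerd d x x"
    unfolding innerd_def scaled_def by (simp add: sum_distrib_left power2_eq_square algebra_simps)
  then show ?thesis unfolding normd_def by (simp add: real_sqrt_mult)
qed

lemma normd_seg: "normd d (vdiffd d (scaled d s x) (scaled d t x)) = \<bar>s - t\<bar> * normd d x"
proof -
  have "innerd d (vdiffd d (scaled d s x) (scaled d t x)) (vdiffd d (scaled d s x) (scaled d t x)) = (s-t)\<^sup>2 * innerd d x x"
    unfolding innerd_def scaled_def vdiffd_def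
    by (simp add: sum_distrib_left) (simp add: power2_eq_square algebra_simps)
  then show ?thesis unfolding normd_def by (simp add: real_sqrt_mult)
qed

lemma normd_vdiff_zero: "normd d (vdiffd d x (zerod d)) = normd d x"
  unfolding normd_def innerd_def zerod_def vdiffd_def by simp

lemma scaled_in_Rd: "scaled d c x \<in> Rd d"
  unfolding scaled_def Rd_def by auto

lemma scaled_one: "x \<in> Rd d \<Longrightarrow> scaled d 1 x = x"
  unfolding scaled_def Rd_def by (auto simp: fun_eq_iff PiE_def extensional_def)

lemma scaled_zero: "scaled d 0 x = zerod d"
  unfolding scaled_def zerod_def by simp

lemma zerod_in_Rd: "zerod d \<in> Rd d"
  unfolding zerod_def Rd_def by auto

lemma vadd_seg: "vaddd d (scaled d (1 - t) (zerod d)) (scaled d t x) = scaled d t x"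
  unfolding vaddd_def scaled_def zerod_def by (auto simp: fun_eq_iff)

lemma normd_zero_imp: "x \<in> Rd d \<Longrightarrow> normd d x = 0 \<Longrightarrow> x = zerod d"
proof -
  assume x: "x \<in> Rd d" and n: "normd d x = 0"
  have "innerd d x x = 0" using n normd_sq[of d x] by simp
  then have "\<forall>i\<in>{..<d}. x i * x i = 0"
    unfolding innerd_def by (subst sum_nonneg_eq_0_iff[symmetric]) auto
  then show "x = zerod d" using x unfolding zerod_def Rd_def
    by (auto simp: fun_eq_iff PiE_def extensional_def)
qed

definition unitv :: "nat \<Rightarrow> nat \<Rightarrow> nat \<Rightarrow> real" where
  "unitv d i = (\<lambda>j\<in>{..<d}. if j = i then 1 else 0)"

lemma unitv_apply: "j < d \<Longrightarrow> unitv d i j = (if j = i then 1 else 0)"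
  unfolding unitv_def by simp

lemma unitv_sphere: "i < d \<Longrightarrow> unitv d i \<in> sphered d"
proof -
  have "innerd d (unitv d i) (unitv d i) = 1" if "i < d"
  proof -
    have "innerd d (unitv d i) (unitv d i) = (\<Sum>j<d. if j = i then 1 else 0)"
      unfolding innerd_def by (rule sum.cong) (auto simp: unitv_apply)
    then show ?thesis using that by simp
  qed
  then show "i < d \<Longrightarrow> unitv d i \<in> sphered d"
    unfolding sphered_def normd_def Rd_def by (auto simp: unitv_def)
qed

lemma innerd_unitv: "i < d \<Longrightarrow> innerd d x (unitv d i) = x i"
proof -
  assume "i < d"
  have "innerd d x (unitv d i) = (\<Sum>j<d. if j = i then x i else 0)"
    unfolding innerd_def by (rule sum.cong) (auto simp: unitv_apply)
  then show ?thesis using \<open>i < d\<close> by simp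
qed

lemma space_lebd: "space (lebd d) = Rd d"
  unfolding lebd_def Rd_def by (simp add: space_PiM)

lemma coord_cont[continuous_intros]: "continuous_on S (\<lambda>x::nat\<Rightarrow>real. x i)"
  by (rule continuous_on_subset[OF continuous_on_product_coordinates]) simp

lemma id_meas: "(\<lambda>x::nat\<Rightarrow>real. x) \<in> borel_measurable (lebd d)"
proof (rule measurable_coordinatewise_then_product)
  fix i
  show "(\<lambda>x::nat\<Rightarrow>real. x i) \<in> borel_measurable (lebd d)"
  proof (cases "i < d")
    case True
    then have "(\<lambda>x::nat\<Rightarrow>real. x i) \<in> measurable (lebd d) lborel"
      unfolding lebd_def by (intro measurable_component_singleton) simp
    moreover have "measurable (lebd d) lborel = measurable (lebd d) (borel :: real measure)"
      by (rule measurable_cong_sets) simp_all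
    ultimately show ?thesis by simp
  next
    case False
    have eq: "\<And>x. x \<in> space (lebd d) \<Longrightarrow> x i = undefined"
      using False unfolding space_lebd Rd_def by (auto simp: PiE_def extensional_def)
    have "(\<lambda>x::nat\<Rightarrow>real. undefined::real) \<in> borel_measurable (lebd d)"
      by (rule measurable_const) simp
    then show ?thesis using measurable_cong[of "lebd d" "\<lambda>x. x i" "\<lambda>x. undefined"] eq by blast
  qed
qed

lemma coord_meas: "(\<lambda>x::nat\<Rightarrow>real. x i) \<in> borel_measurable (lebd d)"
  using measurable_comp[OF id_meas[of d] continuous_on_product_coordinates[THEN borel_measurable_continuous_onI, of i]]
  by (simp add: o_def)

lemma meas_cont:
  assumes "continuous_on K h"
  shows "(h :: (nat\<Rightarrow>real) \<Rightarrow> real) \<in> borel_measurable (restrict_space (lebd d) K)"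
proof -
  have "(\<lambda>x. x) \<in> measurable (restrict_space (lebd d) K) (restrict_space borel K)"
    by (rule measurable_restrict_space3[OF id_meas]) auto
  from measurable_comp[OF this borel_measurable_continuous_on_restrict[OF assms]]
  show ?thesis by (simp add: o_def)
qed

lemma cont_bounded:
  assumes "compact K" "continuous_on K (h :: (nat\<Rightarrow>real) \<Rightarrow> real)"
  shows "\<exists>B. \<forall>x\<in>K. \<bar>h x\<bar> \<le> B"
proof -
  have "bounded (h ` K)" using compact_continuous_image[OF assms(2,1)] compact_imp_bounded by blast
  then show ?thesis unfolding bounded_real by auto
qed

lemma normd_expand: "normd d (vdiffd d x y) = sqrt (\<Sum>i<d. (x i - y i) * (x i - y i))"
  unfolding normd_def innerd_def vdiffd_def by simp

lemma normd_cont: "continuous_on S (\<lambda>x. normd d (vdiffd d x y))"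
  unfolding normd_expand by (intro continuous_intros)

lemma lip_cont:
  assumes "lip_le d K f A"
  shows "continuous_on K f"
  unfolding continuous_on_def
proof
  fix y assume y: "y \<in> K"
  have "((\<lambda>x. A * normd d (vdiffd d x y)) \<longlongrightarrow> A * normd d (vdiffd d y y)) (at y within K)"
    using normd_cont[of K d y] y unfolding continuous_on_def
    by (intro tendsto_mult tendsto_const) auto
  moreover have "normd d (vdiffd d y y) = 0" unfolding normd_expand by simp
  ultimately have t: "((\<lambda>x. A * normd d (vdiffd d x y)) \<longlongrightarrow> 0) (at y within K)" by simp
  have "eventually (\<lambda>x. norm (f x - f y) \<le> A * normd d (vdiffd d x y)) (at y within K)"
    unfolding eventually_at_filter
  proof (rule always_eventually, intro allI impI)
    fix x assume "x \<in> K"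
    then show "norm (f x - f y) \<le> A * normd d (vdiffd d x y)"
      using assms y unfolding lip_le_def by simp
  qed
  from Lim_null_comparison[OF this t]
  have "((\<lambda>x. (f x - f y) + f y) \<longlongrightarrow> 0 + f y) (at y within K)"
    by (intro tendsto_add tendsto_const)
  then show "(f \<longlongrightarrow> f y) (at y within K)" by simp
qed

lemma K_sets: "measure (lebd d) K = 1 \<Longrightarrow> K \<in> sets (lebd d)"
  using measure_notin_sets by fastforce

lemma prob_N: "measure (lebd d) K = 1 \<Longrightarrow> prob_space (restrict_space (lebd d) K)"
  apply (rule prob_space_restrict_space)
  using K_sets apply blast
proof -
  assume m: "measure (lebd d) K = 1"
  have "emeasure (lebd d) K \<noteq> top"
  proof
    assume "emeasure (lebd d) K = top"
    then have "measure (lebd d) K = 0" by (simp add: measure_def)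
    then show False using m by simp
  qed
  then show "emeasure (lebd d) K = 1" using emeasure_eq_ennreal_measure[of "lebd d" K] m by simp
qed

lemma space_N: "measure (lebd d) K = 1 \<Longrightarrow> space (restrict_space (lebd d) K) = K"
  using K_sets by simp

lemma intK: "measure (lebd d) K = 1 \<Longrightarrow>
   (LINT x:K|lebd d. h x) = integral\<^sup>L (restrict_space (lebd d) K) (h :: _ \<Rightarrow> real)"
proof -
  assume "measure (lebd d) K = 1"
  then have "K \<inter> space (lebd d) \<in> sets (lebd d)" using K_sets by (simp add: sets.Int_space_eq2)
  then show ?thesis unfolding set_lebesgue_integral_def by (simp add: integral_restrict_space)
qed

lemma integrable_N:
  assumes "measure (lebd d) K = 1" "compact K" "continuous_on K h"
  shows "integrable (restrict_space (lebd d) K) (h :: _ \<Rightarrow> real)"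
proof -
  interpret prob_space "restrict_space (lebd d) K" using prob_N[OF assms(1)] .
  obtain B where B: "\<forall>x\<in>K. \<bar>h x\<bar> \<le> B" using cont_bounded[OF assms(2,3)] by blast
  show ?thesis
  proof (rule integrable_const_bound[where B=B])
    show "AE x in restrict_space (lebd d) K. norm (h x) \<le> B"
      by (rule AE_I2) (use B space_N[OF assms(1)] in simp)
    show "h \<in> borel_measurable (restrict_space (lebd d) K)" by (rule meas_cont[OF assms(3)])
  qed
qed

lemma innerd_self_cont: "continuous_on S (\<lambda>x. innerd d x x)"
  unfolding innerd_def by (intro continuous_intros)

lemma innerd_lin_cont: "continuous_on S (\<lambda>x. innerd d p x)"
  unfolding innerd_def by (intro continuous_intros)

lemma innerd_zerod: "innerd d v (zerod d) = 0"
  unfolding innerd_def zerod_def by simp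

lemma innerd_comb: "innerd d (vaddd d (scaled d (1 - t) p) (scaled d t x)) (vaddd d (scaled d (1 - t) p) (scaled d t x))
   = innerd d p p + 2 * t * (innerd d p x - innerd d p p) + t\<^sup>2 * (\<Sum>i<d. (x i - p i)\<^sup>2)"
proof -
  have "innerd d (vaddd d (scaled d (1 - t) p) (scaled d t x)) (vaddd d (scaled d (1 - t) p) (scaled d t x))
     = (\<Sum>i<d. p i * p i + 2 * t * (p i * x i - p i * p i) + t\<^sup>2 * (x i - p i)\<^sup>2)"
    unfolding innerd_def vaddd_def scaled_def
    by (rule sum.cong) (simp_all add: power2_eq_square algebra_simps)
  also have "\<dots> = innerd d p p + 2 * t * (innerd d p x - innerd d p p) + t\<^sup>2 * (\<Sum>i<d. (x i - p i)\<^sup>2)"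
    unfolding innerd_def by (simp add: sum.distrib sum_subtractf flip: sum_distrib_left)
  finally show ?thesis .
qed

lemma centroid_in:
  assumes K: "K \<subseteq> Rd d" "compact K" "convexd d K" and m: "measure (lebd d) K = 1"
    and c: "\<forall>i<d. (LINT x:K|lebd d. x i) = 0"
  shows "zerod d \<in> K"
proof (rule ccontr)
  assume nz: "zerod d \<notin> K"
  have ne: "K \<noteq> {}" using m by auto
  obtain p where p: "p \<in> K" "\<forall>y\<in>K. innerd d p p \<le> innerd d y y"
    using continuous_attains_inf[OF K(2) ne innerd_self_cont] by blast
  have pos: "innerd d p p > 0"
  proof -
    have "innerd d p p \<noteq> 0"
    proof
      assume "innerd d p p = 0"
      then have "normd d p = 0" unfolding normd_def by simp
      then have "p = zerod d" using normd_zero_imp p K(1) by blast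
      then show False using p nz by simp
    qed
    then show ?thesis using innerd_nonneg[of d p] by linarith
  qed
  have key: "innerd d p p \<le> innerd d p x" if x: "x \<in> K" for x
  proof (rule ccontr)
    define a where "a = innerd d p x - innerd d p p"
    define b where "b = (\<Sum>i<d. (x i - p i)\<^sup>2)"
    assume "\<not> innerd d p p \<le> innerd d p x"
    then have a: "a < 0" unfolding a_def by simp
    have b: "b \<ge> 0" unfolding b_def by (intro sum_nonneg) simp
    define t where "t = min 1 (- a / (b + 1))"
    have t0: "t > 0" unfolding t_def using a b by (simp add: divide_neg_pos)
    have t1: "t \<le> 1" unfolding t_def by simp
    have tb: "t * b < - a"
    proof -
      have "t * b \<le> (- a / (b + 1)) * b" unfolding t_def using b by (intro mult_right_mono) auto
      also have "\<dots> < - a" using a b by (simp add: field_simps)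
      finally show ?thesis .
    qed
    have "vaddd d (scaled d (1 - t) p) (scaled d t x) \<in> K"
      using K(3) p(1) x t0 t1 unfolding convexd_def by simp
    then have "innerd d p p \<le> innerd d p p + 2 * t * a + t\<^sup>2 * b"
      using p(2) innerd_comb[of d t p x] unfolding a_def b_def by fastforce
    then have "0 \<le> t * (2 * a + t * b)" by (simp add: power2_eq_square algebra_simps)
    then have "0 \<le> 2 * a + t * b" using t0 by (simp add: zero_le_mult_iff)
    then show False using tb a by linarith
  qed
  interpret N: prob_space "restrict_space (lebd d) K" using prob_N[OF m] .
  have int_i: "integrable (restrict_space (lebd d) K) (\<lambda>x. x i)" for i
    by (rule integrable_N[OF m K(2)]) (intro continuous_intros)
  have "integral\<^sup>L (restrict_space (lebd d) K) (\<lambda>x. innerd d p x)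
      = (\<Sum>i<d. p i * integral\<^sup>L (restrict_space (lebd d) K) (\<lambda>x. x i))"
    unfolding innerd_def using int_i by (simp add: integral_sum)
  also have "\<dots> = 0" using c intK[OF m] by simp
  finally have z: "integral\<^sup>L (restrict_space (lebd d) K) (\<lambda>x. innerd d p x) = 0" .
  have "integral\<^sup>L (restrict_space (lebd d) K) (\<lambda>x. innerd d p p)
      \<le> integral\<^sup>L (restrict_space (lebd d) K) (\<lambda>x. innerd d p x)"
    by (rule integral_mono) (use key space_N[OF m] integrable_N[OF m K(2) innerd_lin_cont] in auto)
  then have "innerd d p p \<le> 0" using z by (simp add: N.prob_space)
  then show False using pos by simp
qed

lemma seg_in:
  assumes "convexd d K" "zerod d \<in> K" "x \<in> K" "0 \<le> t" "t \<le> 1"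
  shows "scaled d t x \<in> K"
  using assms vadd_seg[of d t x] unfolding convexd_def by metis

lemma taylor:
  assumes K: "K \<subseteq> Rd d" "convexd d K" "zerod d \<in> K"
    and gr: "is_grad_on d K f g"
    and lip: "\<forall>\<theta>\<in>sphered d. lip_le d K (\<lambda>x. innerd d (g x) \<theta>) B"
    and B: "B \<ge> 0"
    and x: "x \<in> K"
  shows "\<bar>f x - f (zerod d) - innerd d (g (zerod d)) x\<bar> \<le> B * (normd d x)\<^sup>2"
proof -
  define n where "n = normd d x"
  have n0: "n \<ge> 0" unfolding n_def by (rule normd_nonneg)
  define c where "c = innerd d (g (zerod d)) x"
  define \<phi> where "\<phi> = (\<lambda>t. f (scaled d t x) - t * c)"
  have seg: "scaled d t x \<in> K" if "t \<in> {0..1}" for t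
    using seg_in[OF K(2,3) x] that by auto
  have der: "(\<phi> has_field_derivative (innerd d (g (scaled d t x)) x - c)) (at t within {0..1})"
    if t: "t \<in> {0..1}" for t
  proof -
    define y where "y = scaled d t x"
    define D where "D = innerd d (g y) x"
    have y: "y \<in> K" unfolding y_def using seg t .
    have "((\<lambda>s. f (scaled d s x)) has_derivative (*) D) (at t within {0..1})"
      unfolding has_derivative_within_alt
    proof (intro conjI allI impI)
      show "bounded_linear ((*) D)" by (rule bounded_linear_mult_right)
      fix e :: real assume e: "e > 0"
      have "e / (n + 1) > 0" using e n0 by simp
      then obtain \<delta> where \<delta>: "\<delta> > 0" and
        H: "\<forall>z\<in>K. normd d (vdiffd d z y) < \<delta> \<longrightarrow>
          \<bar>f z - f y - innerd d (g y) (vdiffd d z y)\<bar> \<le> e / (n + 1) * normd d (vdiffd d z y)"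
        using gr y unfolding is_grad_on_def by meson
      show "\<exists>d'>0. \<forall>s\<in>{0..1}. norm (s - t) < d' \<longrightarrow>
          norm (f (scaled d s x) - f (scaled d t x) - D * (s - t)) \<le> e * norm (s - t)"
      proof (intro exI[of _ "\<delta> / (n + 1)"] conjI ballI impI)
        show "\<delta> / (n + 1) > 0" using \<delta> n0 by simp
        fix s :: real assume s: "s \<in> {0..1}" and st: "norm (s - t) < \<delta> / (n + 1)"
        have nd: "normd d (vdiffd d (scaled d s x) y) = \<bar>s - t\<bar> * n"
          unfolding y_def n_def by (rule normd_seg)
        have "\<bar>s - t\<bar> * n \<le> \<bar>s - t\<bar> * (n + 1)" by (intro mult_left_mono) simp_all
        also have "\<dots> < \<delta>" using st n0 by (simp add: field_simps)
        finally have lt: "normd d (vdiffd d (scaled d s x) y) < \<delta>" using nd by simp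
        have "\<bar>f (scaled d s x) - f y - innerd d (g y) (vdiffd d (scaled d s x) y)\<bar>
            \<le> e / (n + 1) * normd d (vdiffd d (scaled d s x) y)"
          using H seg[OF s] lt by blast
        moreover have "innerd d (g y) (vdiffd d (scaled d s x) y) = D * (s - t)"
          unfolding y_def D_def innerd_seg by simp
        moreover have "e / (n + 1) * (\<bar>s - t\<bar> * n) \<le> e * \<bar>s - t\<bar>"
        proof -
          have "e / (n + 1) * (\<bar>s - t\<bar> * n) = e * \<bar>s - t\<bar> * (n / (n + 1))" by simp
          also have "\<dots> \<le> e * \<bar>s - t\<bar> * 1"
            using e n0 by (intro mult_left_mono) auto
          finally show ?thesis by simp
        qed
        ultimately show "norm (f (scaled d s x) - f (scaled d t x) - D * (s - t)) \<le> e * norm (s - t)"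
          using nd unfolding y_def by simp
      qed
    qed
    then have "((\<lambda>s. f (scaled d s x)) has_field_derivative D) (at t within {0..1})"
      by (simp add: has_field_derivative_def)
    then have "((\<lambda>s. f (scaled d s x) - s * c) has_field_derivative D - 1 * c) (at t within {0..1})"
      by (intro DERIV_diff DERIV_cmult_right DERIV_ident)
    then show ?thesis unfolding \<phi>_def D_def y_def by simp
  qed
  have bnd: "norm (innerd d (g (scaled d t x)) x - c) \<le> B * n\<^sup>2" if t: "t \<in> {0..1}" for t
  proof (cases "n = 0")
    case True
    then have "x = zerod d" using normd_zero_imp K(1) x unfolding n_def by blast
    then show ?thesis unfolding c_def using B by (simp add: innerd_zerod)
  next
    case False
    then have np: "n > 0" using n0 by simp
    define \<theta> where "\<theta> = scaled d (1 / n) x"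
    have th: "\<theta> \<in> sphered d" unfolding sphered_def \<theta>_def
      using scaled_in_Rd normd_scaled[of d "1/n" x] np unfolding n_def by simp
    have "\<bar>innerd d (g (scaled d t x)) \<theta> - innerd d (g (zerod d)) \<theta>\<bar>
        \<le> B * normd d (vdiffd d (scaled d t x) (zerod d))"
      using lip th seg[OF t] K(3) unfolding lip_le_def by blast
    also have "\<dots> = B * (\<bar>t\<bar> * n)" unfolding normd_vdiff_zero normd_scaled n_def by simp
    also have "\<dots> \<le> B * n" using t B n0 by (intro mult_left_mono) (auto intro: mult_left_le_one_le)
    finally have "\<bar>innerd d (g (scaled d t x)) x - c\<bar> / n \<le> B * n"
      unfolding \<theta>_def innerd_scaled_right c_def using np by (simp add: abs_mult field_simps)
    then show ?thesis using np by (simp add: field_simps power2_eq_square)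
  qed
  have "norm (\<phi> 1 - \<phi> 0) \<le> B * n\<^sup>2 * norm ((1::real) - 0)"
    by (rule field_differentiable_bound[of "{0..1}" \<phi>]) (use der bnd in auto)
  moreover have "\<phi> 1 = f x - c" unfolding \<phi>_def using scaled_one K(1) x by auto
  moreover have "\<phi> 0 = f (zerod d)" unfolding \<phi>_def by (simp add: scaled_zero)
  ultimately show ?thesis unfolding c_def n_def by simp
qed

lemma abs_bound_int:
  fixes f g :: "'a \<Rightarrow> real"
  assumes "integrable M f" "integrable M g" "\<And>x. x \<in> space M \<Longrightarrow> \<bar>f x\<bar> \<le> g x"
  shows "\<bar>integral\<^sup>L M f\<bar> \<le> integral\<^sup>L M g"
proof -
  have "integral\<^sup>L M f \<le> integral\<^sup>L M g"
    by (rule integral_mono) (use assms in \<open>auto simp: abs_le_iff\<close>)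
  moreover have "integral\<^sup>L M (\<lambda>x. - g x) \<le> integral\<^sup>L M f"
  proof (rule integral_mono)
    fix x assume "x \<in> space M"
    then show "- g x \<le> f x" using assms(3)[of x] by linarith
  qed (use assms in auto)
  ultimately show ?thesis by auto
qed

lemma iso_facts:
  assumes iso: "isotropic d K" and d: "d \<ge> 1"
  shows "K \<subseteq> Rd d" "compact K" "convexd d K" "measure (lebd d) K = 1" "zerod d \<in> K"
    "iso_const d K > 0"
    "\<And>i. i < d \<Longrightarrow> (LINT x:K|lebd d. (x i)\<^sup>2) = (iso_const d K)\<^sup>2"
proof -
  show K: "K \<subseteq> Rd d" "compact K" "convexd d K" "measure (lebd d) K = 1"
    using iso unfolding isotropic_def convex_body_def by auto
  show "zerod d \<in> K"
    by (rule centroid_in[OF K]) (use iso in \<open>simp add: isotropic_def\<close>)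
  obtain L where L: "L > 0" "\<forall>\<theta>\<in>sphered d. (LINT x:K|lebd d. (innerd d x \<theta>)\<^sup>2) = L\<^sup>2"
    using iso unfolding isotropic_def by blast
  have u0: "unitv d 0 \<in> sphered d" using d by (intro unitv_sphere) simp
  have eq: "iso_const d K = L"
    unfolding iso_const_def
  proof (rule the_equality)
    show "L > 0 \<and> (\<forall>\<theta>\<in>sphered d. (LINT x:K|lebd d. (innerd d x \<theta>)\<^sup>2) = L\<^sup>2)" using L by blast
    fix L' assume H: "L' > 0 \<and> (\<forall>\<theta>\<in>sphered d. (LINT x:K|lebd d. (innerd d x \<theta>)\<^sup>2) = L'\<^sup>2)"
    then have "L'\<^sup>2 = L\<^sup>2" using L u0 by metis
    then show "L' = L" using H L by (simp add: power2_eq_iff_nonneg)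
  qed
  show "iso_const d K > 0" using eq L by simp
  fix i assume i: "i < d"
  have "(LINT x:K|lebd d. (innerd d x (unitv d i))\<^sup>2) = L\<^sup>2" using L unitv_sphere[OF i] by blast
  then show "(LINT x:K|lebd d. (x i)\<^sup>2) = (iso_const d K)\<^sup>2" using eq innerd_unitv[OF i] by simp
qed

lemma main_bound:
  assumes iso: "isotropic d K" and d: "d \<ge> 1" and A: "A \<ge> 0" and B: "B \<ge> 0"
    and f: "f \<in> C1class d A B K"
  shows "\<bar>(LINT x:K|lebd d. f x) - f (zerod d)\<bar> \<le> A * sqrt (real d) * iso_const d K"
    and "\<bar>(LINT x:K|lebd d. f x) - f (zerod d)\<bar> \<le> B * real d * (iso_const d K)\<^sup>2"
proof -
  note F = iso_facts[OF iso d]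
  define L where "L = iso_const d K"
  define N where "N = restrict_space (lebd d) K"
  interpret N: prob_space N unfolding N_def using prob_N[OF F(4)] .
  have spN: "space N = K" unfolding N_def using space_N[OF F(4)] .
  have intN: "integrable N h" if "continuous_on K h" for h :: "(nat \<Rightarrow> real) \<Rightarrow> real"
    unfolding N_def by (rule integrable_N[OF F(4) F(2) that])
  have LK: "(LINT x:K|lebd d. h x) = integral\<^sup>L N h" for h :: "(nat \<Rightarrow> real) \<Rightarrow> real"
    unfolding N_def by (rule intK[OF F(4)])
  obtain g where g: "C1_on d K f g" "\<forall>x\<in>K. \<bar>f x\<bar> \<le> 1" "lip_le d K f A"
      "\<forall>\<theta>\<in>sphered d. lip_le d K (\<lambda>x. innerd d (g x) \<theta>) B"
    using f unfolding C1class_def by blast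
  have fc: "continuous_on K f" by (rule lip_cont[OF g(3)])
  have sq_int: "integral\<^sup>L N (\<lambda>x. innerd d x x) = real d * L\<^sup>2"
  proof -
    have ii: "integrable N (\<lambda>x. x i * x i)" for i by (intro intN continuous_intros)
    have "integral\<^sup>L N (\<lambda>x. innerd d x x) = (\<Sum>i<d. integral\<^sup>L N (\<lambda>x. x i * x i))"
      unfolding innerd_def using ii by (simp add: integral_sum)
    also have "\<dots> = (\<Sum>i<d. L\<^sup>2)"
      by (rule sum.cong) (use F(7) LK in \<open>auto simp: L_def power2_eq_square\<close>)
    finally show ?thesis by simp
  qed
  have Lpos: "L > 0" using F(6) unfolding L_def .
  have base: "(LINT x:K|lebd d. f x) - f (zerod d) = integral\<^sup>L N (\<lambda>x. f x - f (zerod d))"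
    unfolding LK using intN[OF fc] by (simp add: N.prob_space)
  show "\<bar>(LINT x:K|lebd d. f x) - f (zerod d)\<bar> \<le> A * sqrt (real d) * iso_const d K"
  proof -
    define s where "s = sqrt (real d) * L"
    have sp: "s > 0" unfolding s_def using d Lpos by simp
    have s2: "s\<^sup>2 = real d * L\<^sup>2" unfolding s_def by (simp add: power_mult_distrib)
    have pw: "\<bar>f x - f (zerod d)\<bar> \<le> A / (2 * s) * innerd d x x + A * s / 2" if x: "x \<in> K" for x
    proof -
      define n where "n = normd d x"
      have "\<bar>f x - f (zerod d)\<bar> \<le> A * n"
        using g(3) x F(5) unfolding lip_le_def n_def by (metis normd_vdiff_zero)
      moreover have "A * n \<le> A / (2 * s) * n\<^sup>2 + A * s / 2"
      proof -
        have "0 \<le> A / (2 * s) * (n - s)\<^sup>2" using A sp by simp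
        also have "A / (2 * s) * (n - s)\<^sup>2 = A / (2 * s) * n\<^sup>2 + A * s / 2 - A * n"
          using sp by (simp add: power2_eq_square field_simps)
        finally show ?thesis by simp
      qed
      moreover have "n\<^sup>2 = innerd d x x" unfolding n_def by (rule normd_sq)
      ultimately show ?thesis by simp
    qed
    have "\<bar>integral\<^sup>L N (\<lambda>x. f x - f (zerod d))\<bar> \<le> integral\<^sup>L N (\<lambda>x. A / (2 * s) * innerd d x x + A * s / 2)"
    proof (rule abs_bound_int)
      show "integrable N (\<lambda>x. f x - f (zerod d))" by (intro intN continuous_intros fc)
      show "integrable N (\<lambda>x. A / (2 * s) * innerd d x x + A * s / 2)"
        by (intro intN continuous_intros innerd_self_cont)
      fix x assume "x \<in> space N"
      then show "\<bar>f x - f (zerod d)\<bar> \<le> A / (2 * s) * innerd d x x + A * s / 2" using pw spN by simp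
    qed
    also have "\<dots> = A / (2 * s) * (real d * L\<^sup>2) + A * s / 2"
      using sq_int intN[OF innerd_self_cont] by (simp add: N.prob_space)
    also have "\<dots> = A * s" using sp s2[symmetric] by (simp add: power2_eq_square field_simps)
    finally show ?thesis using base unfolding s_def L_def by (simp add: mult.assoc)
  qed
  show "\<bar>(LINT x:K|lebd d. f x) - f (zerod d)\<bar> \<le> B * real d * (iso_const d K)\<^sup>2"
  proof -
    define c where "c = g (zerod d)"
    have lin0: "integral\<^sup>L N (\<lambda>x. innerd d c x) = 0"
    proof -
      have ii: "integrable N (\<lambda>x. x i)" for i by (intro intN continuous_intros)
      have "integral\<^sup>L N (\<lambda>x. innerd d c x) = (\<Sum>i<d. c i * integral\<^sup>L N (\<lambda>x. x i))"
        unfolding innerd_def using ii by (simp add: integral_sum)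
      also have "\<dots> = 0" using iso LK unfolding isotropic_def by simp
      finally show ?thesis .
    qed
    have base2: "integral\<^sup>L N (\<lambda>x. f x - f (zerod d)) = integral\<^sup>L N (\<lambda>x. f x - f (zerod d) - innerd d c x)"
      using intN[OF fc] intN[OF innerd_lin_cont] lin0 by (simp add: N.prob_space)
    have pw: "\<bar>f x - f (zerod d) - innerd d c x\<bar> \<le> B * innerd d x x" if x: "x \<in> K" for x
      using taylor[OF F(1,3,5) _ g(4) B x] g(1) unfolding C1_on_def c_def normd_sq by blast
    have "\<bar>integral\<^sup>L N (\<lambda>x. f x - f (zerod d) - innerd d c x)\<bar> \<le> integral\<^sup>L N (\<lambda>x. B * innerd d x x)"
    proof (rule abs_bound_int)
      show "integrable N (\<lambda>x. f x - f (zerod d) - innerd d c x)"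
        by (intro intN continuous_intros fc innerd_lin_cont)
      show "integrable N (\<lambda>x. B * innerd d x x)"
        by (intro intN continuous_intros innerd_self_cont)
      fix x assume "x \<in> space N"
      then show "\<bar>f x - f (zerod d) - innerd d c x\<bar> \<le> B * innerd d x x" using pw spN by simp
    qed
    also have "\<dots> = B * real d * L\<^sup>2" using sq_int by simp
    finally show ?thesis using base base2 unfolding L_def by simp
  qed
qed

lemma zero_in_class:
  assumes "A \<ge> 0" "B \<ge> 0"
  shows "(\<lambda>_. 0) \<in> C1class d A B K"
  unfolding C1class_def
proof (intro CollectI exI[of _ "\<lambda>_. zerod d"] conjI)
  have iz: "innerd d (zerod d) v = 0" for v using innerd_zerod[of d v] by (simp add: innerd_commute)
  show "C1_on d K (\<lambda>_. 0) (\<lambda>_. zerod d)"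
  proof -
    have nz: "normd d (vdiffd d (zerod d) (zerod d)) = 0" by (simp add: normd_expand)
    show ?thesis unfolding C1_on_def is_grad_on_def
      by (auto simp: iz zerod_in_Rd nz intro!: exI[of _ 1] mult_nonneg_nonneg normd_nonneg)
  qed
  show "\<forall>x\<in>K. \<bar>0::real\<bar> \<le> 1" by simp
  show "lip_le d K (\<lambda>_. 0) A" unfolding lip_le_def using assms normd_nonneg by simp
  show "\<forall>\<theta>\<in>sphered d. lip_le d K (\<lambda>x. innerd d (zerod d) \<theta>) B"
    unfolding lip_le_def using assms normd_nonneg by (simp add: iz)
qed

theorem theorem1p2:
  fixes K :: "nat \<Rightarrow> (nat \<Rightarrow> real) set" and A B :: "nat \<Rightarrow> real"
  assumes iso: "\<And>d. d \<ge> 1 \<Longrightarrow> isotropic d (K d)"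
    and Apos: "\<And>d. d \<ge> 1 \<Longrightarrow> A d > 0"
    and Bpos: "\<And>d. d \<ge> 1 \<Longrightarrow> B d > 0"
    and lim: "(\<lambda>d. min (A d * sqrt (real d) * iso_const d (K d))
                       (B d * real d * (iso_const d (K d))\<^sup>2)) \<longlonglongrightarrow> 0"
  shows "(\<lambda>d. SUP f\<in>C1class d (A d) (B d) (K d).
             \<bar>(LINT x:K d|lebd d. f x) - f (zerod d)\<bar>) \<longlonglongrightarrow> 0 \<and>
         \<not> curse K (\<lambda>d. C1class d (A d) (B d) (K d)) (\<lambda>d f. LINT x:K d|lebd d. f x)"
proof -
  define m where "m d = min (A d * sqrt (real d) * iso_const d (K d))
                       (B d * real d * (iso_const d (K d))\<^sup>2)" for d
  have mlim: "m \<longlonglongrightarrow> 0" using lim unfolding m_def .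
  have bound: "\<bar>(LINT x:K d|lebd d. f x) - f (zerod d)\<bar> \<le> m d"
    if d: "d \<ge> 1" and f: "f \<in> C1class d (A d) (B d) (K d)" for d f
    using main_bound[OF iso[OF d] d _ _ f] Apos[OF d] Bpos[OF d] unfolding m_def by simp
  define S where "S d = (SUP f\<in>C1class d (A d) (B d) (K d). \<bar>(LINT x:K d|lebd d. f x) - f (zerod d)\<bar>)" for d
  have Sle: "0 \<le> S d \<and> S d \<le> m d" if d: "d \<ge> 1" for d
  proof -
    have z: "(\<lambda>_. 0) \<in> C1class d (A d) (B d) (K d)"
      using zero_in_class Apos[OF d] Bpos[OF d] by (simp add: less_imp_le)
    have bdd: "bdd_above ((\<lambda>f. \<bar>(LINT x:K d|lebd d. f x) - f (zerod d)\<bar>) ` C1class d (A d) (B d) (K d))"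
      using bound[OF d] by (intro bdd_aboveI[of _ "m d"]) auto
    have "S d \<ge> \<bar>(LINT x:K d|lebd d. (0::real)) - 0\<bar>"
      unfolding S_def using cSUP_upper[OF z bdd] by simp
    moreover have "S d \<le> m d"
      unfolding S_def using z bound[OF d] by (intro cSUP_least) auto
    ultimately show ?thesis by simp
  qed
  have part1: "S \<longlonglongrightarrow> 0"
  proof (rule tendsto_sandwich[OF _ _ tendsto_const mlim])
    show "\<forall>\<^sub>F n in sequentially. 0 \<le> S n" using Sle eventually_sequentially by blast
    show "\<forall>\<^sub>F n in sequentially. S n \<le> m n" using Sle eventually_sequentially by blast
  qed
  have part2: "\<not> curse K (\<lambda>d. C1class d (A d) (B d) (K d)) (\<lambda>d f. LINT x:K d|lebd d. f x)"
  proof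
    assume "curse K (\<lambda>d. C1class d (A d) (B d) (K d)) (\<lambda>d f. LINT x:K d|lebd d. f x)"
    then obtain c eps0 \<gamma> where c: "c > 0" and e: "eps0 > 0" and g: "\<gamma> > 0" and
      H: "infinite {d. \<forall>n. achievable (K d) (C1class d (A d) (B d) (K d)) (\<lambda>f. LINT x:K d|lebd d. f x) n eps0
              \<longrightarrow> c * (1 + \<gamma>) ^ d \<le> real n}"
      unfolding curse_def by blast
    have "eventually (\<lambda>d. m d < eps0) sequentially" using order_tendstoD(2)[OF mlim e] .
    then obtain N1 where N1: "\<And>d. d \<ge> N1 \<Longrightarrow> m d < eps0" unfolding eventually_sequentially by blast
    obtain N2 where N2: "1 / c < (1 + \<gamma>) ^ N2" using real_arch_pow[of "1 + \<gamma>" "1 / c"] g by auto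
    obtain d where dS: "d \<in> {d. \<forall>n. achievable (K d) (C1class d (A d) (B d) (K d)) (\<lambda>f. LINT x:K d|lebd d. f x) n eps0
              \<longrightarrow> c * (1 + \<gamma>) ^ d \<le> real n}" and dge: "d \<ge> max 1 (max N1 N2)"
      using H unfolding infinite_nat_iff_unbounded_le by blast
    have d1: "d \<ge> 1" using dge by simp
    have z: "zerod d \<in> K d" using iso_facts(5)[OF iso[OF d1] d1] .
    have ach: "achievable (K d) (C1class d (A d) (B d) (K d)) (\<lambda>f. LINT x:K d|lebd d. f x) 1 eps0"
      unfolding achievable_def
    proof (intro exI[of _ "\<lambda>j vs. zerod d"] exI[of _ "\<lambda>vs. hd vs"] conjI ballI allI impI)
      show "zerod d \<in> K d" for j vs by (rule z)
      fix f assume f: "f \<in> C1class d (A d) (B d) (K d)"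
      have "\<bar>(LINT x:K d|lebd d. f x) - f (zerod d)\<bar> \<le> eps0"
        using bound[OF d1 f] N1[of d] dge by simp
      then show "\<bar>(LINT x:K d|lebd d. f x) - hd (info_vals (\<lambda>j vs. zerod d) f 1)\<bar> \<le> eps0" by simp
    qed
    have le1: "c * (1 + \<gamma>) ^ d \<le> real 1" using dS ach by blast
    have "(1 + \<gamma>) ^ N2 \<le> (1 + \<gamma>) ^ d" using dge g by (intro power_increasing) auto
    then have "1 / c < (1 + \<gamma>) ^ d" using N2 by simp
    then have "1 < c * (1 + \<gamma>) ^ d" using c by (simp add: field_simps)
    then show False using le1 by simp
  qed
  show ?thesis using part1 part2 unfolding S_def by simp
qed

end
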